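(* Let $r\in\{2,3\}$. There exists $\eta_0>0$ such that for every $0<\eta<\eta_0$ there is $n_0=n_0(\eta,r)$ such that every $r$-uniform hypergraph $H$ on $n>n_0$ vertices with $|E(H)|\geq \eta\binom{n}{r}$ contains a copy of $K^{(r)}(t)$, where $t=\eta(\log n)^{1/(r-1)}$.
   Context: An $r$-uniform hypergraph has edges that are $r$-element subsets of its vertex set. $K^{(r)}(t)$ denotes the complete balanced $r$-partite $r$-uniform hypergraph: vertex set partitioned into $r$ classes each of size $t$, and edges all $r$-sets with exactly one vertex in each class. $\log$ is base $2$. *)

theory Defs
  imports Complex_Main
begin

definition uniform_hypergraph :: "nat \<Rightarrow> 'a set \<Rightarrow> 'a set set \<Rightarrow> bool" where
  "uniform_hypergraph r V E \<longleftrightarrow> finite V \<and> (\<forall>e\<in>E. e \<subseteq> V \<and> card e = r)"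

definition contains_K :: "nat \<Rightarrow> nat \<Rightarrow> 'a set \<Rightarrow> 'a set set \<Rightarrow> bool" where
  "contains_K r t V E \<longleftrightarrow>
     (\<exists>A :: nat \<Rightarrow> 'a set.
        (\<forall>i<r. A i \<subseteq> V \<and> card (A i) = t) \<and>
        (\<forall>i<r. \<forall>j<r. i \<noteq> j \<longrightarrow> A i \<inter> A j = {}) \<and>
        (\<forall>f. (\<forall>i<r. f i \<in> A i) \<longrightarrow> f ` {..<r} \<in> E))"

end

theory Submission
  imports Defs begin

lemma suc_le_pow2: "Suc k \<le> 2 ^ k"
  by (induction k) auto

lemma le_2powr: fixes z :: real assumes "z > 0" shows "z \<le> 2 powr z"
proof (cases "z \<le> 1")
  case True
  have "1 \<le> 2 powr z" by (rule ge_one_powr_ge_zero) (use assms in auto)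
  then show ?thesis using True by linarith
next
  case False
  define k where "k = nat \<lfloor>z\<rfloor>"
  have f0: "\<lfloor>z\<rfloor> \<ge> 0" using False by simp
  have rk: "real k = real_of_int \<lfloor>z\<rfloor>" using f0 by (simp add: k_def)
  have k1: "real k \<le> z" "z < real k + 1" unfolding rk
    using of_int_floor_le[of z] real_of_int_floor_add_one_gt[of z] by linarith+
  have "real (Suc k) \<le> real (2 ^ k)" using suc_le_pow2[of k] by (simp only: of_nat_le_iff)
  also have "real (2 ^ k) = (2::real) ^ k" by simp
  also have "(2::real) ^ k = 2 powr real k" by (simp add: powr_realpow)
  also have "\<dots> \<le> 2 powr z" using k1 by simp
  finally show ?thesis using k1 by simp
qed

lemma log2_le: fixes z :: real assumes "z > 0" shows "log 2 z \<le> z"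
proof -
  have "log 2 z \<le> log 2 (2 powr z)" by (subst log_le_cancel_iff) (use le_2powr[OF assms] assms in auto)
  also have "\<dots> = z" by simp
  finally show ?thesis .
qed

lemma log2_le_sqrt: fixes y :: real assumes "y > 0" shows "log 2 y \<le> 2 * sqrt y"
proof -
  have s: "sqrt y > 0" using assms by simp
  have eq: "sqrt y * sqrt y = y" using assms by simp
  have "log 2 y = log 2 (sqrt y * sqrt y)" by (simp only: eq)
  also have "\<dots> = log 2 (sqrt y) + log 2 (sqrt y)" using s by (rule log_mult_pos) (use s in auto)
  also have "\<dots> \<le> 2 * sqrt y" using log2_le[OF s] by simp
  finally show ?thesis .
qed

lemma choose_ratio:
  assumes "t \<le> k" "k \<le> n"
  shows "real (k choose t) * real n ^ t \<ge> real (n choose t) * (real k - real t) ^ t"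
  using assms(1)
proof (induction t)
  case 0 then show ?case by simp
next
  case (Suc t)
  have IH: "real (k choose t) * real n ^ t \<ge> real (n choose t) * (real k - real t) ^ t"
    using Suc by simp
  have e1: "real (k choose Suc t) * real (Suc t) = real (k choose t) * (real k - real t)"
  proof -
    obtain m where m: "k = Suc m" using Suc.prems by (cases k) auto
    have a: "Suc t * (Suc m choose Suc t) = Suc m * (m choose t)" by (rule Suc_times_binomial)
    have b: "(Suc m - t) * (Suc m choose t) = Suc m * (m choose t)"
      using binomial_absorb_comp[of "Suc m" t] by simp
    have "(k choose Suc t) * Suc t = (k - t) * (k choose t)" using a b m by (simp add: mult.commute)
    hence "real ((k choose Suc t) * Suc t) = real ((k - t) * (k choose t))" by simp
    then show ?thesis using Suc.prems by (simp add: of_nat_diff algebra_simps)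
  qed
  have e2: "real (n choose Suc t) * real (Suc t) = real (n choose t) * (real n - real t)"
  proof -
    obtain m where m: "n = Suc m" using Suc.prems assms(2) by (cases n) auto
    have a: "Suc t * (Suc m choose Suc t) = Suc m * (m choose t)" by (rule Suc_times_binomial)
    have b: "(Suc m - t) * (Suc m choose t) = Suc m * (m choose t)"
      using binomial_absorb_comp[of "Suc m" t] by simp
    have "(n choose Suc t) * Suc t = (n - t) * (n choose t)" using a b m by (simp add: mult.commute)
    hence "real ((n choose Suc t) * Suc t) = real ((n - t) * (n choose t))" by simp
    then show ?thesis using Suc.prems assms(2) by (simp add: of_nat_diff algebra_simps)
  qed
  have kt: "real k - real t \<ge> 1" using Suc.prems by simp
  have p1: "(real k - real (Suc t)) ^ t \<le> (real k - real t) ^ t"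
    by (rule power_mono) (use Suc.prems in auto)
  have "real (n choose t) * (real k - real (Suc t)) ^ t \<le> real (k choose t) * real n ^ t"
    by (rule order_trans[OF mult_left_mono[OF p1] IH]) simp
  moreover have "(real n - real t) * (real k - real (Suc t)) \<le> real n * (real k - real t)"
    by (rule mult_mono) (use Suc.prems assms(2) in auto)
  ultimately have "(real (n choose t) * (real k - real (Suc t)) ^ t) * ((real n - real t) * (real k - real (Suc t)))
      \<le> (real (k choose t) * real n ^ t) * (real n * (real k - real t))"
    by (rule mult_mono) (use Suc.prems assms(2) in auto)
  hence "(real (n choose t) * (real n - real t)) * (real k - real (Suc t)) ^ Suc t
      \<le> (real (k choose t) * (real k - real t)) * real n ^ Suc t"
    by (simp only: ac_simps power_Suc)
  hence "(real (n choose Suc t) * real (Suc t)) * (real k - real (Suc t)) ^ Suc t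
      \<le> (real (k choose Suc t) * real (Suc t)) * real n ^ Suc t"
    by (simp only: e1 e2)
  hence "real (Suc t) * (real (n choose Suc t) * (real k - real (Suc t)) ^ Suc t)
      \<le> real (Suc t) * (real (k choose Suc t) * real n ^ Suc t)"
    by (simp only: ac_simps)
  then show ?case by (rule mult_left_le_imp_le) simp
qed

lemma bip:
  fixes X :: "'x set" and Y :: "'y set" and R :: "'x \<Rightarrow> 'y \<Rightarrow> bool" and \<delta> :: real
  assumes fin: "finite X" "finite Y" and d: "0 < \<delta>" "\<delta> \<le> 1"
    and tb: "real t \<le> \<delta> * real (card Y) / 4"
    and sm: "\<delta> * real (card X) * real (card Y) \<le> (\<Sum>x\<in>X. real (card {y\<in>Y. R x y}))"
  shows "\<exists>S X'. S \<subseteq> Y \<and> card S = t \<and> X' \<subseteq> X \<and>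
           real (card X) * (\<delta>/2) * (\<delta>/4)^t \<le> real (card X') \<and> (\<forall>x\<in>X'. \<forall>y\<in>S. R x y)"
proof (cases "card Y = 0")
  case True
  then have t0: "t = 0" using tb by simp
  have "real (card X) * (\<delta>/2) * (\<delta>/4)^t \<le> real (card X)"
    using d t0 mult_left_mono[of \<delta> 2 "real (card X)"] by simp
  then show ?thesis using t0 by (intro exI[of _ "{}"] exI[of _ X]) auto
next
  case False
  define n where "n = card Y"
  have npos: "real n > 0" using False n_def by simp
  define N where "N x = {y\<in>Y. R x y}" for x
  have Nsub: "N x \<subseteq> Y" for x unfolding N_def by auto
  have Nfin: "finite (N x)" for x using Nsub fin(2) by (rule finite_subset)
  have Nle: "card (N x) \<le> n" for x unfolding n_def by (rule card_mono[OF fin(2) Nsub])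
  define G where "G = {x\<in>X. \<delta> * real n / 2 \<le> real (card (N x))}"
  have GX: "G \<subseteq> X" unfolding G_def by auto
  have Gfin: "finite G" using GX fin(1) by (rule finite_subset)
  have G1: "real (card X) * \<delta> / 2 \<le> real (card G)"
  proof -
    have "(\<Sum>x\<in>X. real (card (N x))) = (\<Sum>x\<in>G. real (card (N x))) + (\<Sum>x\<in>X-G. real (card (N x)))"
      using sum.subset_diff[OF GX fin(1), of "\<lambda>x. real (card (N x))"] by (simp add: add.commute)
    also have "(\<Sum>x\<in>G. real (card (N x))) \<le> (\<Sum>x\<in>G. real n)"
      by (rule sum_mono) (use Nle in auto)
    also have "(\<Sum>x\<in>X-G. real (card (N x))) \<le> (\<Sum>x\<in>X-G. \<delta> * real n / 2)"
      by (rule sum_mono) (auto simp: G_def)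
    also have "(\<Sum>x\<in>X-G. \<delta> * real n / 2) = real (card (X - G)) * (\<delta> * real n / 2)" by simp
    also have "\<dots> \<le> real (card X) * (\<delta> * real n / 2)"
      using card_mono[OF fin(1), of "X - G"] d npos by (intro mult_right_mono) auto
    finally have "(\<Sum>x\<in>X. real (card (N x))) \<le> real (card G) * real n + real (card X) * (\<delta> * real n / 2)"
      by simp
    with sm have "\<delta> * real (card X) * real n \<le> real (card G) * real n + real (card X) * (\<delta> * real n / 2)"
      unfolding N_def n_def by simp
    hence "(real (card X) * \<delta> / 2) * real n \<le> real (card G) * real n" by (simp add: algebra_simps)
    thus ?thesis using npos by simp
  qed
  have tn: "t \<le> n"
  proof -
    have a: "\<delta> * real n \<le> 1 * real n" by (rule mult_right_mono) (use d in auto)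
    have "real t \<le> real n" using tb a unfolding n_def[symmetric] by linarith
    thus ?thesis by simp
  qed
  have per: "real (n choose t) * (\<delta>/4)^t \<le> real (card (N x) choose t)" if xG: "x \<in> G" for x
  proof -
    define k where "k = card (N x)"
    have kb: "\<delta> * real n / 2 \<le> real k" using xG unfolding G_def k_def by simp
    have dn: "\<delta> * real n \<ge> 0" using d npos by simp
    have "real t \<le> real k" using kb tb dn unfolding n_def[symmetric] by linarith
    hence tk: "t \<le> k" by simp
    have kn: "k \<le> n" unfolding k_def by (rule Nle)
    have cr: "real (n choose t) * (real k - real t) ^ t \<le> real (k choose t) * real n ^ t"
      by (rule choose_ratio[OF tk kn])
    have "(\<delta> * real n / 4) ^ t \<le> (real k - real t) ^ t"
      by (rule power_mono) (use kb tb d npos in \<open>simp_all add: n_def\<close>)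
    hence "real (n choose t) * (\<delta> * real n / 4) ^ t \<le> real (n choose t) * (real k - real t) ^ t"
      by (rule mult_left_mono) simp
    also note cr
    finally have f1: "real (n choose t) * (\<delta> * real n / 4) ^ t \<le> real (k choose t) * real n ^ t" .
    have "(\<delta> * real n / 4)^t = (real n * (\<delta>/4))^t" by (simp add: algebra_simps)
    also have "\<dots> = real n^t * (\<delta>/4)^t" by (rule power_mult_distrib)
    finally have "(real (n choose t) * (\<delta>/4)^t) * real n ^ t \<le> real (k choose t) * real n ^ t"
      using f1 by (simp add: ac_simps)
    thus ?thesis unfolding k_def using npos by simp
  qed
  define T where "T = {S. S \<subseteq> Y \<and> card S = t}"
  have Tfin: "finite T" unfolding T_def using fin(2) by simp
  have cardT: "card T = n choose t" unfolding T_def n_def by (rule n_subsets[OF fin(2)])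
  have Tne: "T \<noteq> {}" using cardT tn by (metis card.empty zero_less_binomial not_less0 less_irrefl neq0_conv)
  have dc: "(\<Sum>x\<in>G. card (N x) choose t) = (\<Sum>S\<in>T. card {x\<in>G. S \<subseteq> N x})"
  proof -
    have "(\<Sum>x\<in>G. card (N x) choose t) = (\<Sum>x\<in>G. \<Sum>S\<in>T. if S \<subseteq> N x then 1 else 0)"
    proof (rule sum.cong[OF refl])
      fix x assume "x \<in> G"
      have "{S. S \<subseteq> N x \<and> card S = t} = {S\<in>T. S \<subseteq> N x}" unfolding T_def using Nsub by blast
      hence "card (N x) choose t = card {S\<in>T. S \<subseteq> N x}" using n_subsets[OF Nfin[of x], of t] by simp
      also have "\<dots> = (\<Sum>S\<in>{S\<in>T. S \<subseteq> N x}. 1)" by simp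
      also have "\<dots> = (\<Sum>S\<in>T. if S \<subseteq> N x then 1 else 0)" by (rule sum.inter_filter[OF Tfin])
      finally show "card (N x) choose t = (\<Sum>S\<in>T. if S \<subseteq> N x then 1 else 0)" .
    qed
    also have "\<dots> = (\<Sum>S\<in>T. \<Sum>x\<in>G. if S \<subseteq> N x then 1 else 0)" by (rule sum.swap)
    also have "\<dots> = (\<Sum>S\<in>T. card {x\<in>G. S \<subseteq> N x})"
    proof (rule sum.cong[OF refl])
      fix S
      have "card {x\<in>G. S \<subseteq> N x} = (\<Sum>x\<in>{x\<in>G. S \<subseteq> N x}. 1)" by simp
      also have "\<dots> = (\<Sum>x\<in>G. if S \<subseteq> N x then 1 else 0)" by (rule sum.inter_filter[OF Gfin])
      finally show "(\<Sum>x\<in>G. if S \<subseteq> N x then 1 else 0) = card {x\<in>G. S \<subseteq> N x}" by simp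
    qed
    finally show ?thesis .
  qed
  have "\<exists>S\<in>T. real (card X) * (\<delta>/2) * (\<delta>/4)^t \<le> real (card {x\<in>G. S \<subseteq> N x})"
  proof (rule ccontr)
    assume "\<not> ?thesis"
    hence lt: "\<forall>S\<in>T. real (card {x\<in>G. S \<subseteq> N x}) < real (card X) * (\<delta>/2) * (\<delta>/4)^t" by auto
    have "(\<Sum>S\<in>T. real (card {x\<in>G. S \<subseteq> N x})) < (\<Sum>S\<in>T. real (card X) * (\<delta>/2) * (\<delta>/4)^t)"
      by (rule sum_strict_mono[OF Tfin Tne]) (use lt in auto)
    also have "\<dots> = real (n choose t) * ((real (card X) * \<delta> / 2) * (\<delta>/4)^t)" using cardT by simp
    also have "\<dots> \<le> real (n choose t) * (real (card G) * (\<delta>/4)^t)"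
      using G1 d by (intro mult_left_mono mult_right_mono) auto
    also have "\<dots> = (\<Sum>x\<in>G. real (n choose t) * (\<delta>/4)^t)" by simp
    also have "\<dots> \<le> (\<Sum>x\<in>G. real (card (N x) choose t))" by (rule sum_mono) (rule per)
    also have "\<dots> = real (\<Sum>x\<in>G. card (N x) choose t)" by simp
    also have "\<dots> = (\<Sum>S\<in>T. real (card {x\<in>G. S \<subseteq> N x}))" unfolding dc by simp
    finally show False by simp
  qed
  then obtain S where ST: "S \<in> T" and big: "real (card X) * (\<delta>/2) * (\<delta>/4)^t \<le> real (card {x\<in>G. S \<subseteq> N x})"
    by blast
  show ?thesis
  proof (intro exI[of _ S] exI[of _ "{x\<in>G. S \<subseteq> N x}"] conjI)
    show "S \<subseteq> Y" "card S = t" using ST unfolding T_def by auto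
    show "{x\<in>G. S \<subseteq> N x} \<subseteq> X" using GX by auto
    show "real (card X) * (\<delta>/2) * (\<delta>/4)^t \<le> real (card {x\<in>G. S \<subseteq> N x})" by (rule big)
    show "\<forall>x\<in>{x\<in>G. S \<subseteq> N x}. \<forall>y\<in>S. R x y" unfolding N_def by auto
  qed
qed


lemma pow_bound:
  fixes \<beta> c l :: real and n t m :: nat
  assumes "\<beta> = 2 powr (-c)" "real n = 2 powr l" "real t + c * real m \<le> l"
  shows "real t \<le> real n * \<beta> ^ m"
proof -
  have "\<beta> ^ m = (2 powr (-c)) powr real m" using assms(1) by (simp add: powr_realpow)
  also have "\<dots> = 2 powr (-c * real m)" by (rule powr_powr)
  finally have b: "\<beta> ^ m = 2 powr (-c * real m)" .
  have "real n * \<beta> ^ m = 2 powr (l + (-c * real m))" unfolding b assms(2) by (simp only: powr_add)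
  also have "\<dots> \<ge> 2 powr (real t)" using assms(3) by simp
  finally have "2 powr (real t) \<le> real n * \<beta> ^ m" .
  moreover have "2 powr (real t) = (2::real) ^ t" by (simp add: powr_realpow)
  moreover have "real t \<le> (2::real) ^ t"
  proof -
    have "t < 2 ^ t" by simp
    hence "real t < real (2 ^ t)" by (simp only: of_nat_less_iff)
    thus ?thesis by simp
  qed
  ultimately show ?thesis by linarith
qed

lemma card_le_pairs2:
  assumes "uniform_hypergraph 2 V E"
  shows "card E \<le> card (SIGMA x:V. {y\<in>V. {x,y} \<in> E})"
proof -
  define P where "P = (SIGMA x:V. {y\<in>V. {x,y} \<in> E})"
  have fV: "finite V" using assms unfolding uniform_hypergraph_def by simp
  have fP: "finite P" unfolding P_def using fV by auto
  define g where "g e = (SOME p. p \<in> P \<and> {fst p, snd p} = e)" for e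
  have gp: "g e \<in> P \<and> {fst (g e), snd (g e)} = e" if "e \<in> E" for e
  proof -
    have "e \<subseteq> V" "card e = 2" using assms that unfolding uniform_hypergraph_def by auto
    then obtain x y where "e = {x,y}" "x \<noteq> y" "x \<in> V" "y \<in> V" by (auto simp: card_2_iff)
    hence "\<exists>p. p \<in> P \<and> {fst p, snd p} = e" using that unfolding P_def by (intro exI[of _ "(x,y)"]) auto
    thus ?thesis unfolding g_def by (rule someI_ex)
  qed
  have "inj_on g E"
  proof (rule inj_onI)
    fix a b assume "a \<in> E" "b \<in> E" "g a = g b"
    thus "a = b" using gp[of a] gp[of b] by metis
  qed
  moreover have "g ` E \<subseteq> P" using gp by auto
  ultimately show ?thesis unfolding P_def[symmetric] using fP by (rule card_inj_on_le)
qed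

lemma card_le_pairs3:
  assumes "uniform_hypergraph 3 V E"
  shows "card E \<le> card (SIGMA p:V\<times>V. {z\<in>V. {fst p, snd p, z} \<in> E})"
proof -
  define P where "P = (SIGMA p:V\<times>V. {z\<in>V. {fst p, snd p, z} \<in> E})"
  have fV: "finite V" using assms unfolding uniform_hypergraph_def by simp
  have fP: "finite P" unfolding P_def using fV by auto
  define g where "g e = (SOME q. q \<in> P \<and> {fst (fst q), snd (fst q), snd q} = e)" for e
  have gp: "g e \<in> P \<and> {fst (fst (g e)), snd (fst (g e)), snd (g e)} = e" if "e \<in> E" for e
  proof -
    have "e \<subseteq> V" "card e = 3" using assms that unfolding uniform_hypergraph_def by auto
    then obtain x y z where "e = {x,y,z}" "x \<in> V" "y \<in> V" "z \<in> V" by (auto simp: card_3_iff)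
    hence "\<exists>q. q \<in> P \<and> {fst (fst q), snd (fst q), snd q} = e" using that unfolding P_def
      by (intro exI[of _ "((x,y),z)"]) auto
    thus ?thesis unfolding g_def by (rule someI_ex)
  qed
  have "inj_on g E"
  proof (rule inj_onI)
    fix a b assume "a \<in> E" "b \<in> E" "g a = g b"
    thus "a = b" using gp[of a] gp[of b] by metis
  qed
  moreover have "g ` E \<subseteq> P" using gp by auto
  ultimately show ?thesis unfolding P_def[symmetric] using fP by (rule card_inj_on_le)
qed


lemma sqrt_small: fixes \<eta> :: real assumes "0 < \<eta>" "\<eta> < 1/2000" shows "sqrt \<eta> \<le> 1/44"
proof (rule ccontr)
  assume "\<not> ?thesis"
  hence "1/44 < sqrt \<eta>" by simp
  hence "(1/44) * (1/44) < sqrt \<eta> * sqrt \<eta>" using assms by (intro mult_strict_mono) auto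
  also have "\<dots> = \<eta>" using assms by simp
  finally show False using assms by simp
qed

lemma key2: fixes \<eta> :: real assumes "0 < \<eta>" "\<eta> < 1/2000"
  shows "(log 2 (16/\<eta>) + 1) * \<eta> \<le> 1/2"
proof -
  have s0: "sqrt \<eta> > 0" using assms by simp
  have "log 2 (16/\<eta>) \<le> 2 * sqrt (16/\<eta>)" using assms by (intro log2_le_sqrt) auto
  also have "sqrt (16/\<eta>) = 4 / sqrt \<eta>" by (simp add: real_sqrt_divide)
  finally have "log 2 (16/\<eta>) * \<eta> \<le> (2 * (4 / sqrt \<eta>)) * \<eta>" using assms by (intro mult_right_mono) auto
  also have "(2 * (4 / sqrt \<eta>)) * \<eta> = 8 * sqrt \<eta>"
  proof -
    have "\<eta> = sqrt \<eta> * sqrt \<eta>" using assms by simp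
    thus ?thesis using s0 by (simp add: field_simps)
  qed
  finally have "log 2 (16/\<eta>) * \<eta> \<le> 8 * sqrt \<eta>" .
  thus ?thesis using sqrt_small[OF assms] assms by (simp add: algebra_simps)
qed

lemma key3: fixes \<eta> :: real assumes "0 < \<eta>" "\<eta> < 1/2000"
  shows "log 2 (48/\<eta>) * \<eta>^2 \<le> 1/8"
proof -
  have "log 2 (48/\<eta>) \<le> 48/\<eta>" using assms by (intro log2_le) auto
  hence "log 2 (48/\<eta>) * \<eta>^2 \<le> (48/\<eta>) * \<eta>^2" by (intro mult_right_mono) auto
  also have "\<dots> = 48 * \<eta>" using assms by (simp add: power2_eq_square)
  finally show ?thesis using assms by simp
qed


lemma ceil_bounds: fixes x :: real assumes "0 < x" shows "real (nat \<lceil>x\<rceil>) \<le> x + 1" "1 \<le> nat \<lceil>x\<rceil>"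
proof -
  have c0: "0 < \<lceil>x\<rceil>" using assms by simp
  hence "real (nat \<lceil>x\<rceil>) = real_of_int \<lceil>x\<rceil>" by simp
  thus "real (nat \<lceil>x\<rceil>) \<le> x + 1" by simp
  have "0 < nat \<lceil>x\<rceil>" using c0 by simp
  thus "1 \<le> nat \<lceil>x\<rceil>" by (simp only: One_nat_def Suc_le_eq)
qed

lemma two_choose2: "2 * real (n choose 2) = real n * (real n - 1)"
proof (cases n)
  case 0 then show ?thesis by simp
next
  case (Suc m)
  have "2 * (n choose 2) = n * ((n - 1) choose 1)" using times_binomial_minus1_eq[of 2 n] by simp
  hence "2 * (n choose 2) = n * m" using Suc by simp
  hence "real (2 * (n choose 2)) = real (n * m)" by (simp only:)
  thus ?thesis using Suc by (simp add: algebra_simps)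
qed

lemma case2:
  fixes r :: nat and \<eta> :: real
  assumes r: "r = 2" and eta: "0 < \<eta>" "\<eta> < 1/2000"
  shows "\<exists>n0::nat. \<forall>(V::'a set) (E::'a set set).
         uniform_hypergraph r V E \<and> card V > n0 \<and>
         real (card E) \<ge> \<eta> * real (card V choose r) \<longrightarrow>
         contains_K r (nat \<lceil>\<eta> * (log 2 (real (card V))) powr (1 / (real r - 1))\<rceil>) V E"
proof -
  define c where "c = log 2 (16/\<eta>)"
  have c0: "0 < c" unfolding c_def using eta by simp
  have kc: "(c+1)*\<eta> \<le> 1/2" unfolding c_def by (rule key2[OF eta])
  have bdef: "\<eta>/16 = 2 powr (-c)"
  proof -
    have "2 powr (-c) = inverse (2 powr c)" by (rule powr_minus)
    also have "2 powr c = 16/\<eta>" unfolding c_def using eta by simp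
    finally show ?thesis by simp
  qed
  define n0 where "n0 = nat \<lceil>2 powr (4*(c+1))\<rceil>"
  show ?thesis
  proof (intro exI[of _ n0] allI impI)
    fix V :: "'a set" and E :: "'a set set"
    assume H: "uniform_hypergraph r V E \<and> n0 < card V \<and> \<eta> * real (card V choose r) \<le> real (card E)"
    define n where "n = card V"
    have U: "uniform_hypergraph 2 V E" and nn0: "n0 < n" and dens: "\<eta> * real (n choose 2) \<le> real (card E)"
      using H r n_def by auto
    have fV: "finite V" using U unfolding uniform_hypergraph_def by simp
    have "2 powr (4*(c+1)) \<le> real n0" unfolding n0_def by (rule real_nat_ceiling_ge)
    also have "real n0 < real n" using nn0 by simp
    finally have nbig: "2 powr (4*(c+1)) < real n" .
    have npos: "0 < real n" using nbig by (smt (verit) powr_gt_zero)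
    define l where "l = log 2 (real n)"
    have nl: "real n = 2 powr l" unfolding l_def using npos by simp
    have lb: "4*(c+1) < l" using nbig unfolding nl by simp
    have l0: "0 < l" using lb c0 by simp
    have "2 powr 1 \<le> 2 powr l" by (rule powr_mono) (use lb c0 in auto)
    hence n2: "2 \<le> real n" unfolding nl by simp
    have tdef: "(log 2 (real (card V))) powr (1 / (real r - 1)) = l"
      using r l0 unfolding l_def n_def[symmetric] by simp
    define t where "t = nat \<lceil>\<eta> * l\<rceil>"
    have t1: "real t \<le> \<eta> * l + 1" unfolding t_def by (rule ceil_bounds(1)) (use eta l0 in simp)
    have "(c+1)*(real t+1) \<le> (c+1)*(\<eta> * l + 2)" using t1 c0 by (intro mult_left_mono) auto
    also have "\<dots> = ((c+1)*\<eta>) * l + 2*(c+1)" by (simp add: algebra_simps)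
    also have "((c+1)*\<eta>) * l \<le> (1/2) * l" using kc l0 by (intro mult_right_mono) auto
    finally have "(c+1)*(real t+1) \<le> l" using lb by simp
    moreover have "real t + c * real (t+1) = (c+1)*(real t+1) - 1" by (simp add: algebra_simps)
    ultimately have "real t + c * real (t+1) \<le> l" by simp
    hence main: "real t \<le> real n * (\<eta>/16)^(t+1)" by (intro pow_bound[OF bdef nl])
    have bet: "(\<eta>/16)^(t+1) \<le> \<eta>/16"
    proof -
      have "(\<eta>/16)^t \<le> 1" using eta by (intro power_le_one) auto
      hence "(\<eta>/16) * (\<eta>/16)^t \<le> (\<eta>/16) * 1" using eta by (intro mult_left_mono) auto
      thus ?thesis by simp
    qed
    have tb: "real t \<le> (\<eta>/4) * real (card V) / 4"
    proof -
      have "real n * (\<eta>/16)^(t+1) \<le> real n * (\<eta>/16)" using bet npos by (intro mult_left_mono) auto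
      moreover have "real n * (\<eta>/16) = (\<eta>/4) * real n / 4" by simp
      ultimately show ?thesis using main unfolding n_def by linarith
    qed
    have sm: "(\<eta>/4) * real (card V) * real (card V) \<le> (\<Sum>x\<in>V. real (card {y\<in>V. {x,y} \<in> E}))"
    proof -
      have "0 \<le> real n * (real n - 2)" using n2 by simp
      hence "real n * real n / 4 \<le> real (n choose 2)" using two_choose2[of n] by (simp add: algebra_simps)
      hence "\<eta> * (real n * real n / 4) \<le> \<eta> * real (n choose 2)" using eta by (intro mult_left_mono) auto
      also note dens
      also have "real (card E) \<le> real (card (SIGMA x:V. {y\<in>V. {x,y} \<in> E}))"
        using card_le_pairs2[OF U] by simp
      also have "card (SIGMA x:V. {y\<in>V. {x,y} \<in> E}) = (\<Sum>x\<in>V. card {y\<in>V. {x,y} \<in> E})"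
        using fV by simp
      finally show ?thesis unfolding n_def by simp
    qed
    obtain S X' where S: "S \<subseteq> V" "card S = t" and X': "X' \<subseteq> V"
      and cX': "real (card V) * ((\<eta>/4)/2) * ((\<eta>/4)/4)^t \<le> real (card X')"
      and adj: "\<forall>x\<in>X'. \<forall>y\<in>S. {x,y} \<in> E"
      using bip[OF fV fV _ _ tb sm] eta by auto
    have "real t \<le> real (card X')"
    proof -
      have "(\<eta>/16)^(t+1) = (\<eta>/16) * (\<eta>/16)^t" by simp
      also have "\<dots> \<le> (\<eta>/4/2) * (\<eta>/16)^t" using eta by (intro mult_right_mono) auto
      also have "(\<eta>/16) = \<eta>/4/4" by simp
      finally have "real n * (\<eta>/16)^(t+1) \<le> real n * ((\<eta>/4/2) * (\<eta>/4/4)^t)" using npos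
        by (intro mult_left_mono) auto
      thus ?thesis using main cX' unfolding n_def by (simp add: ac_simps)
    qed
    hence "t \<le> card X'" by simp
    then obtain A0 where A0: "A0 \<subseteq> X'" "card A0 = t" by (rule obtain_subset_with_card_n)
    have E2: "card e = 2" if "e \<in> E" for e using U that unfolding uniform_hypergraph_def by auto
    have disj: "A0 \<inter> S = {}"
    proof (rule ccontr)
      assume "A0 \<inter> S \<noteq> {}"
      then obtain w where "w \<in> A0" "w \<in> S" by auto
      hence "{w,w} \<in> E" using adj A0 by blast
      hence "card {w} = 2" using E2 by simp
      thus False by simp
    qed
    define A where "A i = (if i = 0 then A0 else S)" for i :: nat
    have less2: "(i::nat) < 2 \<longleftrightarrow> i = 0 \<or> i = 1" for i by auto
    have h1: "\<forall>i<2. A i \<subseteq> V \<and> card (A i) = t" using A0 X' S by (auto simp: A_def less2)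
    have h2: "\<forall>i<2. \<forall>j<2. i \<noteq> j \<longrightarrow> A i \<inter> A j = {}" using disj by (auto simp: A_def less2)
    have h3: "\<forall>f. (\<forall>i<2. f i \<in> A i) \<longrightarrow> f ` {..<2} \<in> E"
    proof (intro allI impI)
      fix f :: "nat \<Rightarrow> 'a" assume f: "\<forall>i<2. f i \<in> A i"
      have im: "f ` {..<2} = {f 0, f 1}" by (auto simp: numeral_2_eq_2 lessThan_Suc)
      have f0: "f 0 \<in> X'" using f[rule_format, of 0] A0 by (auto simp: A_def)
      have f1: "f 1 \<in> S" using f[rule_format, of 1] by (auto simp: A_def)
      have "{f 0, f 1} \<in> E" using f0 f1 adj by blast
      thus "f ` {..<2} \<in> E" unfolding im .
    qed
    have "contains_K 2 t V E" unfolding contains_K_def by (intro exI[of _ A] conjI h1 h2 h3)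
    thus "contains_K r (nat \<lceil>\<eta> * (log 2 (real (card V))) powr (1 / (real r - 1))\<rceil>) V E"
      unfolding tdef t_def[symmetric] using r by simp
  qed
qed


lemma six_choose3: assumes "1 \<le> n" shows "6 * real (n choose 3) = real n * (real n - 1) * (real n - 2)"
proof -
  have a: "3 * (n choose 3) = n * ((n - 1) choose 2)" using times_binomial_minus1_eq[of 3 n] by simp
  have b: "2 * real ((n - 1) choose 2) = real (n - 1) * (real (n - 1) - 1)" by (rule two_choose2)
  have "real (3 * (n choose 3)) = real (n * ((n - 1) choose 2))" using a by (simp only:)
  hence "3 * real (n choose 3) = real n * real ((n - 1) choose 2)" by simp
  hence "6 * real (n choose 3) = real n * (2 * real ((n - 1) choose 2))" by simp
  also have "\<dots> = real n * (real (n - 1) * (real (n - 1) - 1))" unfolding b ..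
  also have "real (n - 1) = real n - 1" using assms by simp
  finally show ?thesis by (simp add: algebra_simps)
qed

lemma cube_choose3: assumes "6 \<le> n" shows "real n * real n * real n / 12 \<le> real (n choose 3)"
proof -
  have h: "6 * real (n choose 3) = real n * (real n - 1) * (real n - 2)" using assms by (intro six_choose3) simp
  have n6: "6 \<le> real n" using assms by simp
  have "0 \<le> real n * (real n * (real n - 6) + 4)" using n6 by (intro mult_nonneg_nonneg) auto
  hence "real n * real n * real n \<le> 2 * (real n * (real n - 1) * (real n - 2))"
    by (simp add: algebra_simps)
  thus ?thesis using h by simp
qed


lemma case3:
  fixes r :: nat and \<eta> :: real
  assumes r: "r = 3" and eta: "0 < \<eta>" "\<eta> < 1/2000"
  shows "\<exists>n0::nat. \<forall>(V::'a set) (E::'a set set).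
         uniform_hypergraph r V E \<and> card V > n0 \<and>
         real (card E) \<ge> \<eta> * real (card V choose r) \<longrightarrow>
         contains_K r (nat \<lceil>\<eta> * (log 2 (real (card V))) powr (1 / (real r - 1))\<rceil>) V E"
proof -
  define c where "c = log 2 (48/\<eta>)"
  define \<beta> where "\<beta> = \<eta>/48"
  have c0: "0 < c" unfolding c_def using eta by simp
  have kc: "c * \<eta>^2 \<le> 1/8" unfolding c_def by (rule key3[OF eta])
  have b0: "0 < \<beta>" "\<beta> \<le> 1/4" unfolding \<beta>_def using eta by auto
  have bdef: "\<beta> = 2 powr (-c)"
  proof -
    have "2 powr (-c) = inverse (2 powr c)" by (rule powr_minus)
    also have "2 powr c = 48/\<eta>" unfolding c_def using eta by simp
    finally show ?thesis unfolding \<beta>_def by simp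
  qed
  define n0 where "n0 = nat \<lceil>2 powr (36*c+4)\<rceil>"
  show ?thesis
  proof (intro exI[of _ n0] allI impI)
    fix V :: "'a set" and E :: "'a set set"
    assume H: "uniform_hypergraph r V E \<and> n0 < card V \<and> \<eta> * real (card V choose r) \<le> real (card E)"
    define n where "n = card V"
    have U: "uniform_hypergraph 3 V E" and nn0: "n0 < n" and dens: "\<eta> * real (n choose 3) \<le> real (card E)"
      using H r n_def by auto
    have fV: "finite V" using U unfolding uniform_hypergraph_def by simp
    have E3: "card e = 3" if "e \<in> E" for e using U that unfolding uniform_hypergraph_def by auto
    have "2 powr (36*c+4) \<le> real n0" unfolding n0_def by (rule real_nat_ceiling_ge)
    also have "real n0 < real n" using nn0 by simp
    finally have nbig: "2 powr (36*c+4) < real n" .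
    have npos: "0 < real n" using nbig by (smt (verit) powr_gt_zero)
    define l where "l = log 2 (real n)"
    have nl: "real n = 2 powr l" unfolding l_def using npos by simp
    have lb: "36*c+4 < l" using nbig unfolding nl by simp
    have l0: "0 < l" using lb c0 by simp
    have "2 powr 4 \<le> 2 powr l" by (rule powr_mono) (use lb c0 in auto)
    hence n16: "16 \<le> real n" unfolding nl by simp
    hence n6: "6 \<le> n" by simp
    define L where "L = sqrt l"
    have L0: "0 \<le> L" unfolding L_def using l0 by simp
    have LL: "L * L = l" unfolding L_def using l0 by simp
    have tdef: "(log 2 (real (card V))) powr (1 / (real r - 1)) = L"
      using r l0 unfolding l_def L_def n_def[symmetric] by (simp add: powr_half_sqrt)
    have etaL: "0 < \<eta> * L" using eta l0 unfolding L_def by simp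
    define t where "t = nat \<lceil>\<eta> * L\<rceil>"
    have t1: "real t \<le> \<eta> * L + 1" unfolding t_def by (rule ceil_bounds(1)[OF etaL])
    have tpos: "1 \<le> t" unfolding t_def by (rule ceil_bounds(2)[OF etaL])
    define m where "m = (t+2)^2"
    have mr: "real m = (real t + 2)^2" unfolding m_def by simp
    have "real m \<le> (\<eta> * L + 3)^2" unfolding mr by (rule power_mono) (use t1 in auto)
    also have "\<dots> \<le> 2 * (\<eta>^2 * (L * L)) + 18"
    proof -
      have "0 \<le> (\<eta> * L - 3)^2" by simp
      thus ?thesis by (simp add: power2_eq_square algebra_simps)
    qed
    also have "\<dots> = 2 * (\<eta>^2 * l) + 18" by (simp only: LL)
    finally have m1: "real m \<le> 2 * (\<eta>^2 * l) + 18" .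
    have "c * real m \<le> c * (2 * (\<eta>^2 * l) + 18)" using m1 c0 by (intro mult_left_mono) auto
    also have "\<dots> = 2 * ((c * \<eta>^2) * l) + 18 * c" by (simp add: algebra_simps)
    also have "(c * \<eta>^2) * l \<le> (1/8) * l" using kc l0 by (intro mult_right_mono) auto
    finally have cm: "c * real m \<le> l/4 + 18 * c" by simp
    have "\<eta> * L \<le> 1 * L" using eta L0 by (intro mult_right_mono) auto
    moreover have "L \<le> l/4 + 1"
    proof -
      have "0 \<le> (L - 2)^2" by simp
      hence "L \<le> (L * L)/4 + 1" by (simp add: power2_eq_square algebra_simps)
      thus ?thesis by (simp only: LL)
    qed
    ultimately have tl: "real t \<le> l/4 + 2" using t1 by simp
    have "real t + c * real m \<le> l" using cm tl lb by simp
    hence main: "real t \<le> real n * \<beta> ^ m" by (intro pow_bound[OF bdef nl])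
    have m1le: "1 \<le> m" unfolding m_def by simp
    have tm: "t + 2 \<le> m" unfolding m_def by (simp add: power2_eq_square)
    have em: "t + 1 + (t + 2) * t \<le> m" unfolding m_def by (simp add: power2_eq_square algebra_simps)
    have bm1: "\<beta> ^ m \<le> \<beta> ^ 1" using m1le b0 by (intro power_decreasing) auto
    have bm2: "\<beta> ^ m \<le> \<beta> ^ (t+2)" using tm b0 by (intro power_decreasing) auto
    have tb1: "real t \<le> (4*\<beta>) * real (card V) / 4"
    proof -
      have "real n * \<beta>^m \<le> real n * \<beta>" using bm1 npos by (intro mult_left_mono) auto
      moreover have "real n * \<beta> = (4*\<beta>) * real n / 4" by simp
      ultimately show ?thesis using main unfolding n_def by linarith
    qed
    have sm1: "(4*\<beta>) * real (card (V\<times>V)) * real (card V) \<le>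
               (\<Sum>p\<in>V\<times>V. real (card {z\<in>V. {fst p, snd p, z} \<in> E}))"
    proof -
      have "\<eta> * (real n * real n * real n / 12) \<le> \<eta> * real (n choose 3)"
        using cube_choose3[OF n6] eta by (intro mult_left_mono) auto
      also note dens
      also have "real (card E) \<le> real (card (SIGMA p:V\<times>V. {z\<in>V. {fst p, snd p, z} \<in> E}))"
        using card_le_pairs3[OF U] by simp
      also have "card (SIGMA p:V\<times>V. {z\<in>V. {fst p, snd p, z} \<in> E}) = (\<Sum>p\<in>V\<times>V. card {z\<in>V. {fst p, snd p, z} \<in> E})"
        using fV by simp
      finally have "\<eta> * (real n * real n * real n / 12) \<le> (\<Sum>p\<in>V\<times>V. real (card {z\<in>V. {fst p, snd p, z} \<in> E}))"
        by simp
      moreover have "(4*\<beta>) * real (card (V\<times>V)) * real (card V) = \<eta> * (real n * real n * real n / 12)"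
        unfolding \<beta>_def n_def by (simp add: card_cartesian_product)
      ultimately show ?thesis by simp
    qed
    have fVV: "finite (V\<times>V)" using fV by simp
    have b4: "0 < 4*\<beta>" "4*\<beta> \<le> 1" using b0 by auto
    obtain S X1 where S: "S \<subseteq> V" "card S = t" and X1: "X1 \<subseteq> V\<times>V"
      and cX1: "real (card (V\<times>V)) * ((4*\<beta>)/2) * ((4*\<beta>)/4)^t \<le> real (card X1)"
      and adj1: "\<forall>p\<in>X1. \<forall>z\<in>S. {fst p, snd p, z} \<in> E"
      using bip[OF fVV fV b4 tb1 sm1] by blast
    define \<delta> where "\<delta> = 2 * \<beta> * \<beta>^t"
    have d0: "0 < \<delta>" unfolding \<delta>_def using b0 by simp
    have d1: "\<delta> \<le> 1"
    proof -
      have "\<beta>^t \<le> 1" using b0 by (intro power_le_one) auto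
      hence "2 * \<beta> * \<beta>^t \<le> 1 * 1" using b0 by (intro mult_mono) auto
      thus ?thesis unfolding \<delta>_def by simp
    qed
    have d4: "\<beta>^(t+2) \<le> \<delta>/4"
    proof -
      have "\<beta> * \<beta> \<le> (1/2) * \<beta>" using b0 by (intro mult_right_mono) auto
      hence "(\<beta> * \<beta>) * \<beta>^t \<le> ((1/2) * \<beta>) * \<beta>^t" using b0 by (intro mult_right_mono) auto
      thus ?thesis unfolding \<delta>_def by (simp add: power_add power2_eq_square ac_simps)
    qed
    have tb2: "real t \<le> \<delta> * real (card V) / 4"
    proof -
      have "real n * \<beta>^m \<le> real n * (\<delta>/4)" using bm2 d4 npos by (intro mult_left_mono) auto
      moreover have "real n * (\<delta>/4) = \<delta> * real n / 4" by simp
      ultimately show ?thesis using main unfolding n_def by linarith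
    qed
    have sm2: "\<delta> * real (card V) * real (card V) \<le> (\<Sum>x\<in>V. real (card {y\<in>V. (x,y) \<in> X1}))"
    proof -
      have eqX: "(SIGMA x:V. {y\<in>V. (x,y) \<in> X1}) = X1" using X1 by auto
      have "card X1 = card (SIGMA x:V. {y\<in>V. (x,y) \<in> X1})" by (simp only: eqX)
      also have "\<dots> = (\<Sum>x\<in>V. card {y\<in>V. (x,y) \<in> X1})" by (rule card_SigmaI) (use fV in auto)
      finally have "real (card X1) = real (\<Sum>x\<in>V. card {y\<in>V. (x,y) \<in> X1})" by (simp only:)
      hence "(\<Sum>x\<in>V. real (card {y\<in>V. (x,y) \<in> X1})) = real (card X1)"
        by (simp only: of_nat_sum)
      moreover have "real (card (V\<times>V)) * ((4*\<beta>)/2) * ((4*\<beta>)/4)^t = \<delta> * real (card V) * real (card V)"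
        unfolding \<delta>_def by (simp add: card_cartesian_product)
      ultimately show ?thesis using cX1 by simp
    qed
    obtain S2 X2 where S2: "S2 \<subseteq> V" "card S2 = t" and X2: "X2 \<subseteq> V"
      and cX2: "real (card V) * (\<delta>/2) * (\<delta>/4)^t \<le> real (card X2)"
      and adj2: "\<forall>x\<in>X2. \<forall>y\<in>S2. (x,y) \<in> X1"
      using bip[OF fV fV d0 d1 tb2 sm2] by blast
    have "real t \<le> real (card X2)"
    proof -
      have "(\<beta>^(t+2))^t \<le> (\<delta>/4)^t" using d4 b0 by (intro power_mono) auto
      hence "\<beta>^((t+2)*t) \<le> (\<delta>/4)^t" by (simp only: power_mult)
      moreover have "\<delta>/2 = \<beta>^(t+1)" unfolding \<delta>_def by simp
      ultimately have "\<beta>^(t+1) * \<beta>^((t+2)*t) \<le> (\<delta>/2) * (\<delta>/4)^t" using b0 by (intro mult_mono) auto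
      hence "\<beta>^(t + 1 + (t+2)*t) \<le> (\<delta>/2) * (\<delta>/4)^t" by (simp add: power_add)
      moreover have "\<beta>^m \<le> \<beta>^(t + 1 + (t+2)*t)" using em b0 by (intro power_decreasing) auto
      ultimately have "\<beta>^m \<le> (\<delta>/2) * (\<delta>/4)^t" by simp
      hence "real n * \<beta>^m \<le> real n * ((\<delta>/2) * (\<delta>/4)^t)" using npos by (intro mult_left_mono) auto
      thus ?thesis using main cX2 unfolding n_def by (simp add: ac_simps)
    qed
    hence "t \<le> card X2" by simp
    then obtain A0 where A0: "A0 \<subseteq> X2" "card A0 = t" by (rule obtain_subset_with_card_n)
    have ne: "A0 \<noteq> {}" "S2 \<noteq> {}" "S \<noteq> {}" using A0 S2 S tpos by auto
    have edge: "{x, y, z} \<in> E" if "x \<in> A0" "y \<in> S2" "z \<in> S" for x y z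
    proof -
      have "(x,y) \<in> X1" using adj2 that A0 by blast
      thus ?thesis using adj1 that by fastforce
    qed
    have card2: "card {a, b, c} \<noteq> 3" if "a = b \<or> b = c \<or> a = c" for a b c :: 'a
      using that by (auto simp: card_insert_if)
    have disj01: "A0 \<inter> S2 = {}"
    proof (rule ccontr)
      assume "A0 \<inter> S2 \<noteq> {}"
      then obtain w where "w \<in> A0" "w \<in> S2" by auto
      moreover obtain z where "z \<in> S" using ne by auto
      ultimately have "{w, w, z} \<in> E" by (rule edge)
      thus False using E3 card2 by blast
    qed
    have disj02: "A0 \<inter> S = {}"
    proof (rule ccontr)
      assume "A0 \<inter> S \<noteq> {}"
      then obtain w where w: "w \<in> A0" "w \<in> S" by auto
      obtain y where "y \<in> S2" using ne by auto
      hence "{w, y, w} \<in> E" using w by (intro edge)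
      thus False using E3 card2 by blast
    qed
    have disj12: "S2 \<inter> S = {}"
    proof (rule ccontr)
      assume "S2 \<inter> S \<noteq> {}"
      then obtain w where w: "w \<in> S2" "w \<in> S" by auto
      obtain x where "x \<in> A0" using ne by auto
      hence "{x, w, w} \<in> E" using w by (intro edge)
      thus False using E3 card2 by blast
    qed
    define A where "A i = (if i = 0 then A0 else if i = 1 then S2 else S)" for i :: nat
    have less3: "(i::nat) < 3 \<longleftrightarrow> i = 0 \<or> i = 1 \<or> i = 2" for i by auto
    have h1: "\<forall>i<3. A i \<subseteq> V \<and> card (A i) = t" using A0 X2 S S2 by (auto simp: A_def less3)
    have h2: "\<forall>i<3. \<forall>j<3. i \<noteq> j \<longrightarrow> A i \<inter> A j = {}" using disj01 disj02 disj12
      by (auto simp: A_def less3)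
    have h3: "\<forall>f. (\<forall>i<3. f i \<in> A i) \<longrightarrow> f ` {..<3} \<in> E"
    proof (intro allI impI)
      fix f :: "nat \<Rightarrow> 'a" assume f: "\<forall>i<3. f i \<in> A i"
      have im: "f ` {..<3} = {f 0, f 1, f 2}" by (auto simp: numeral_3_eq_3 numeral_2_eq_2 lessThan_Suc)
      have f0: "f 0 \<in> A0" using f[rule_format, of 0] by (auto simp: A_def)
      have f1: "f 1 \<in> S2" using f[rule_format, of 1] by (auto simp: A_def)
      have f2: "f 2 \<in> S" using f[rule_format, of 2] by (auto simp: A_def)
      have "{f 0, f 1, f 2} \<in> E" using f0 f1 f2 by (rule edge)
      thus "f ` {..<3} \<in> E" unfolding im .
    qed
    have "contains_K 3 t V E" unfolding contains_K_def by (intro exI[of _ A] conjI h1 h2 h3)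
    thus "contains_K r (nat \<lceil>\<eta> * (log 2 (real (card V))) powr (1 / (real r - 1))\<rceil>) V E"
      unfolding tdef t_def[symmetric] using r by simp
  qed
qed


theorem corollary1:
  fixes r :: nat
  assumes "r \<in> {2, 3}"
  shows "\<exists>\<eta>0::real. \<eta>0 > 0 \<and>
    (\<forall>\<eta>::real. 0 < \<eta> \<and> \<eta> < \<eta>0 \<longrightarrow>
      (\<exists>n0::nat. \<forall>(V::'a set) (E::'a set set).
         uniform_hypergraph r V E \<and> card V > n0 \<and>
         real (card E) \<ge> \<eta> * real (card V choose r) \<longrightarrow>
         contains_K r (nat \<lceil>\<eta> * (log 2 (real (card V))) powr (1 / (real r - 1))\<rceil>) V E))"
proof (intro exI[of _ "1/2000"] conjI allI impI)
  show "(0::real) < 1/2000" by simp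
  fix \<eta> :: real assume e: "0 < \<eta> \<and> \<eta> < 1/2000"
  show "\<exists>n0::nat. \<forall>(V::'a set) (E::'a set set).
         uniform_hypergraph r V E \<and> card V > n0 \<and>
         real (card E) \<ge> \<eta> * real (card V choose r) \<longrightarrow>
         contains_K r (nat \<lceil>\<eta> * (log 2 (real (card V))) powr (1 / (real r - 1))\<rceil>) V E"
  proof (cases "r = 2")
    case True
    show ?thesis using case2[OF True] e by blast
  next
    case False
    hence "r = 3" using assms by auto
    show ?thesis using case3[OF \<open>r = 3\<close>] e by blast
  qed
qed

end
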